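(* Let $\mathscr Q_n$ be a non-singular quadric in $\mathrm{PG}(n,2)$ of projective index $g\ge1$, let $0\le s<g$, let $\alpha_s$ be an $s$-dimensional subspace contained in $\mathscr Q_n$, and let $\Gamma_s$ be the graph constructed from $\alpha_s$ as described below. If $\mathcal C$ is a clique of $\Gamma_s$ with exactly $2^{g+1}-1$ vertices, then $\mathcal C$ is a $g$-clique of Class A or of Class B.
   Context: A non-singular quadric $\mathscr Q_n$ in $\mathrm{PG}(n,2)$ is the point set of a non-degenerate quadric; its projective index $g$ is the largest dimension of a projective subspace contained in $\mathscr Q_n$, and the $g$-dimensional subspaces contained in $\mathscr Q_n$ are its generators. The point-graph $\Gamma$ has vertex set the points of $\mathscr Q_n$, two distinct points adjacent iff the line joining them is contained in $\mathscr Q_n$. A point $X$ of $\mathscr Q_n$ has type (i) if $X\in\alpha_s$; type (ii) if $X\notin\alpha_s$ and $\langle\alpha_s,X\rangle\subseteq\mathscr Q_n$; type (iii) otherwise. Let $\mathcal X_s$ be the type (ii) points and $\mathcal Y_s$ the points of type (i) or (iii). The graph $\Gamma_s$ has the same vertex set as $\Gamma$ and the same edges, except that for each vertex $R\in\mathcal Y_s$ having exactly $\frac12|\mathcal X_s|$ neighbours in $\mathcal X_s$ (in $\Gamma$), those edges are deleted and $R$ is joined instead to the other $\frac12|\mathcal X_s|$ vertices of $\mathcal X_s$. A $g$-clique of Class A is the point set of a generator of $\mathscr Q_n$ containing $\alpha_s$. A $g$-clique of Class B is a set $(\alpha_s\cap\Pi)\cup(\Sigma\setminus(\alpha_s\cup\Pi))\cup(\Pi\setminus\Sigma)$,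 where $\Sigma,\Pi$ are generators of $\mathscr Q_n$ with $\alpha_s\subseteq\Sigma$, $\alpha_s\not\subseteq\Pi$, and $\Sigma\cap\Pi$ of dimension $g-1$. *)

theory Defs
  imports Main "HOL-Library.Z2"
begin

text \<open>PG(n,2): vectors of GF(2)^(n+1) are functions nat => bit supported in {0..n};
  since the only nonzero scalar is 1, projective points are exactly the nonzero vectors.\<close>

definition vadd :: "(nat \<Rightarrow> bit) \<Rightarrow> (nat \<Rightarrow> bit) \<Rightarrow> (nat \<Rightarrow> bit)" where
  "vadd x y = (\<lambda>i. x i + y i)"

definition vecs :: "nat \<Rightarrow> (nat \<Rightarrow> bit) set" where
  "vecs n = {x. \<forall>i>n. x i = 0}"

definition points :: "nat \<Rightarrow> (nat \<Rightarrow> bit) set" where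
  "points n = vecs n - {(\<lambda>_. 0)}"

definition qform :: "nat \<Rightarrow> (nat \<Rightarrow> nat \<Rightarrow> bit) \<Rightarrow> (nat \<Rightarrow> bit) \<Rightarrow> bit" where
  "qform n a x = (\<Sum>i\<in>{0..n}. \<Sum>j\<in>{i..n}. a i j * x i * x j)"

definition quadric :: "nat \<Rightarrow> (nat \<Rightarrow> nat \<Rightarrow> bit) \<Rightarrow> (nat \<Rightarrow> bit) set" where
  "quadric n a = {x \<in> points n. qform n a x = 0}"

definition bform :: "nat \<Rightarrow> (nat \<Rightarrow> nat \<Rightarrow> bit) \<Rightarrow> (nat \<Rightarrow> bit) \<Rightarrow> (nat \<Rightarrow> bit) \<Rightarrow> bit" where
  "bform n a x y = qform n a (vadd x y) - qform n a x - qform n a y"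

definition nonsingular :: "nat \<Rightarrow> (nat \<Rightarrow> nat \<Rightarrow> bit) \<Rightarrow> bool" where
  "nonsingular n a \<longleftrightarrow> \<not> (\<exists>P \<in> quadric n a. \<forall>y \<in> vecs n. bform n a P y = 0)"

text \<open>Projective subspaces of PG(n,2) as point sets: sets of points which together with the
  zero vector form a linear subspace (over GF(2): closed under addition).\<close>
definition is_subspace :: "nat \<Rightarrow> (nat \<Rightarrow> bit) set \<Rightarrow> bool" where
  "is_subspace n S \<longleftrightarrow> S \<subseteq> points n \<and> (\<forall>x\<in>S. \<forall>y\<in>S. x \<noteq> y \<longrightarrow> vadd x y \<in> S)"

text \<open>A projective subspace of dimension d has exactly 2^(d+1)-1 points over GF(2).\<close>
definition subspace_dim :: "nat \<Rightarrow> (nat \<Rightarrow> bit) set \<Rightarrow> nat \<Rightarrow> bool" where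
  "subspace_dim n S d \<longleftrightarrow> is_subspace n S \<and> card S = 2 ^ (d + 1) - 1"

definition pspan :: "nat \<Rightarrow> (nat \<Rightarrow> bit) set \<Rightarrow> (nat \<Rightarrow> bit) set" where
  "pspan n A = \<Inter> {S. is_subspace n S \<and> A \<subseteq> S}"

definition proj_index :: "nat \<Rightarrow> (nat \<Rightarrow> nat \<Rightarrow> bit) \<Rightarrow> nat \<Rightarrow> bool" where
  "proj_index n a g \<longleftrightarrow>
     (\<exists>S. subspace_dim n S g \<and> S \<subseteq> quadric n a) \<and>
     (\<forall>S d. subspace_dim n S d \<and> S \<subseteq> quadric n a \<longrightarrow> d \<le> g)"

definition generator :: "nat \<Rightarrow> (nat \<Rightarrow> nat \<Rightarrow> bit) \<Rightarrow> nat \<Rightarrow> (nat \<Rightarrow> bit) set \<Rightarrow> bool" where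
  "generator n a g S \<longleftrightarrow> subspace_dim n S g \<and> S \<subseteq> quadric n a"

definition adj :: "nat \<Rightarrow> (nat \<Rightarrow> nat \<Rightarrow> bit) \<Rightarrow> (nat \<Rightarrow> bit) \<Rightarrow> (nat \<Rightarrow> bit) \<Rightarrow> bool" where
  "adj n a X Y \<longleftrightarrow> X \<in> quadric n a \<and> Y \<in> quadric n a \<and> X \<noteq> Y \<and>
      pspan n {X, Y} \<subseteq> quadric n a"

definition Xs :: "nat \<Rightarrow> (nat \<Rightarrow> nat \<Rightarrow> bit) \<Rightarrow> (nat \<Rightarrow> bit) set \<Rightarrow> (nat \<Rightarrow> bit) set" where
  "Xs n a \<alpha> = {X \<in> quadric n a. X \<notin> \<alpha> \<and> pspan n (insert X \<alpha>) \<subseteq> quadric n a}"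

definition Ys :: "nat \<Rightarrow> (nat \<Rightarrow> nat \<Rightarrow> bit) \<Rightarrow> (nat \<Rightarrow> bit) set \<Rightarrow> (nat \<Rightarrow> bit) set" where
  "Ys n a \<alpha> = quadric n a - Xs n a \<alpha>"

definition switched :: "nat \<Rightarrow> (nat \<Rightarrow> nat \<Rightarrow> bit) \<Rightarrow> (nat \<Rightarrow> bit) set \<Rightarrow> (nat \<Rightarrow> bit) \<Rightarrow> bool" where
  "switched n a \<alpha> R \<longleftrightarrow> R \<in> Ys n a \<alpha> \<and>
     2 * card {X \<in> Xs n a \<alpha>. adj n a R X} = card (Xs n a \<alpha>)"

definition adj_s :: "nat \<Rightarrow> (nat \<Rightarrow> nat \<Rightarrow> bit) \<Rightarrow> (nat \<Rightarrow> bit) set \<Rightarrow> (nat \<Rightarrow> bit) \<Rightarrow> (nat \<Rightarrow> bit) \<Rightarrow> bool" where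
  "adj_s n a \<alpha> U V \<longleftrightarrow>
     (if switched n a \<alpha> U \<and> V \<in> Xs n a \<alpha> then U \<noteq> V \<and> \<not> adj n a U V
      else if switched n a \<alpha> V \<and> U \<in> Xs n a \<alpha> then U \<noteq> V \<and> \<not> adj n a U V
      else adj n a U V)"

definition clique_s :: "nat \<Rightarrow> (nat \<Rightarrow> nat \<Rightarrow> bit) \<Rightarrow> (nat \<Rightarrow> bit) set \<Rightarrow> (nat \<Rightarrow> bit) set \<Rightarrow> bool" where
  "clique_s n a \<alpha> C \<longleftrightarrow> C \<subseteq> quadric n a \<and>
     (\<forall>U\<in>C. \<forall>V\<in>C. U \<noteq> V \<longrightarrow> adj_s n a \<alpha> U V)"

definition classA :: "nat \<Rightarrow> (nat \<Rightarrow> nat \<Rightarrow> bit) \<Rightarrow> nat \<Rightarrow> (nat \<Rightarrow> bit) set \<Rightarrow> (nat \<Rightarrow> bit) set \<Rightarrow> bool" where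
  "classA n a g \<alpha> C \<longleftrightarrow> generator n a g C \<and> \<alpha> \<subseteq> C"

definition classB :: "nat \<Rightarrow> (nat \<Rightarrow> nat \<Rightarrow> bit) \<Rightarrow> nat \<Rightarrow> (nat \<Rightarrow> bit) set \<Rightarrow> (nat \<Rightarrow> bit) set \<Rightarrow> bool" where
  "classB n a g \<alpha> C \<longleftrightarrow> (\<exists>\<Sigma> \<Pi>. generator n a g \<Sigma> \<and> generator n a g \<Pi> \<and>
     \<alpha> \<subseteq> \<Sigma> \<and> \<not> \<alpha> \<subseteq> \<Pi> \<and> subspace_dim n (\<Sigma> \<inter> \<Pi>) (g - 1) \<and>
     C = (\<alpha> \<inter> \<Pi>) \<union> (\<Sigma> - (\<alpha> \<union> \<Pi>)) \<union> (\<Pi> - \<Sigma>))"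

end

theory Submission
  imports Defs "HOL-Library.Function_Algebras"
begin


declare add_bit_eq_xor[simp del] mult_bit_eq_and[simp del]

lemma bit_cases2: "(x::bit) = 0 \<or> x = 1"
  using bit_not_zero_iff by blast

lemma bit_add_self[simp]: "(x::bit) + x = 0"
  using bit_cases2[of x] by auto

lemma bit_minus_eq[simp]: "(x::bit) - y = x + y"
  using bit_cases2[of x] bit_cases2[of y] by auto

lemma fun_add_self[simp]: "(x::nat\<Rightarrow>bit) + x = 0"
  by (rule ext) (simp add: plus_fun_def)

lemma vadd_eq: "vadd x y = x + y"
  by (simp add: vadd_def plus_fun_def)

definition Bf :: "nat \<Rightarrow> (nat \<Rightarrow> nat \<Rightarrow> bit) \<Rightarrow> (nat \<Rightarrow> bit) \<Rightarrow> (nat \<Rightarrow> bit) \<Rightarrow> bit" where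
  "Bf n cf x y = (\<Sum>i\<in>{0..n}. \<Sum>j\<in>{i..n}. cf i j * (x i * y j + y i * x j))"

lemma qform_add: "qform n cf (x + y) = qform n cf x + qform n cf y + Bf n cf x y"
  unfolding qform_def Bf_def
  by (simp add: plus_fun_def algebra_simps sum.distrib)

lemma bform_eq: "bform n cf x y = Bf n cf x y"
  unfolding bform_def vadd_eq qform_add by (simp add: algebra_simps del: bit_minus_eq)

lemma qform_add': "qform n cf (x + y) = qform n cf x + qform n cf y + bform n cf x y"
  by (simp add: qform_add bform_eq)

lemma bform_sym: "bform n cf x y = bform n cf y x"
  unfolding bform_eq Bf_def by (simp add: algebra_simps)

lemma bform_add2: "bform n cf x (y + z) = bform n cf x y + bform n cf x z"
  unfolding bform_eq Bf_def by (simp add: plus_fun_def algebra_simps sum.distrib)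

lemma bform_add1: "bform n cf (x + y) z = bform n cf x z + bform n cf y z"
  using bform_add2 bform_sym by metis

lemma bform_self[simp]: "bform n cf x x = 0"
proof -
  have "\<And>u v::bit. u * (v + v) = 0" by simp
  thus ?thesis unfolding bform_eq Bf_def by (simp add: mult.commute)
qed

lemma bform_zero2[simp]: "bform n cf x 0 = 0"
  unfolding bform_eq Bf_def by simp
lemma bform_zero1[simp]: "bform n cf 0 x = 0"
  unfolding bform_eq Bf_def by simp
lemma qform_zero[simp]: "qform n cf 0 = 0"
  unfolding qform_def by simp



type_synonym vec = "nat \<Rightarrow> bit"

lemma two_vec[simp]: "(2::vec) = 0"
proof -
  have "(2::vec) = 1 + 1" by (rule one_add_one[symmetric])
  also have "\<dots> = 0" by (rule fun_add_self)
  finally show ?thesis .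
qed

definition lin :: "vec set \<Rightarrow> bool" where
  "lin L \<longleftrightarrow> 0 \<in> L \<and> (\<forall>x\<in>L. \<forall>y\<in>L. x + y \<in> L)"

definition lspan :: "vec set \<Rightarrow> vec set" where
  "lspan F = \<Inter> {L. lin L \<and> F \<subseteq> L}"

lemma lin_0: "lin L \<Longrightarrow> 0 \<in> L" by (simp add: lin_def)
lemma lin_add: "lin L \<Longrightarrow> x \<in> L \<Longrightarrow> y \<in> L \<Longrightarrow> x + y \<in> L" by (simp add: lin_def)

lemma add_cancel_left[simp]: "(x::vec) + (x + y) = y"
  by (simp add: add.assoc[symmetric])
lemma add_cancel_right[simp]: "(y::vec) + x + x = y"
  by (simp add: add.assoc)
lemma add_eq_0_iff: "(x::vec) + y = 0 \<longleftrightarrow> x = y"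
  by (metis add_cancel_left add_0_right fun_add_self)
lemma add_eq_iff: "(x::vec) + y = z \<longleftrightarrow> y = x + z"
  by (metis add_cancel_left)

lemma lin_lspan: "lin (lspan F)"
  unfolding lspan_def lin_def by blast
lemma lspan_sup: "F \<subseteq> lspan F"
  unfolding lspan_def by blast
lemma lspan_least: "lin L \<Longrightarrow> F \<subseteq> L \<Longrightarrow> lspan F \<subseteq> L"
  unfolding lspan_def by blast
lemma lspan_lin: "lin L \<Longrightarrow> lspan L = L"
  using lspan_least lspan_sup by blast
lemma lspan_mono: "F \<subseteq> F' \<Longrightarrow> lspan F \<subseteq> lspan F'"
  using lspan_least lspan_sup lin_lspan by (meson order_trans)

lemma lin_sub: "lin L \<Longrightarrow> x \<in> L \<Longrightarrow> x + y \<in> L \<longleftrightarrow> y \<in> L"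
  by (metis add_cancel_left lin_add)

lemma lspan_insert: "lspan (insert x F) = lspan F \<union> (\<lambda>y. x + y) ` lspan F"
proof
  let ?R = "lspan F \<union> (\<lambda>y. x + y) ` lspan F"
  have "lin ?R"
    unfolding lin_def
  proof (intro conjI ballI)
    show "0 \<in> ?R" using lin_0[OF lin_lspan] by blast
    fix u v assume u: "u \<in> ?R" and v: "v \<in> ?R"
    have L: "lin (lspan F)" by (rule lin_lspan)
    show "u + v \<in> ?R"
    proof -
      have h1: "\<And>p q. (x + p) + (x + q) = p + (q::vec)"
        by (metis add.assoc add.commute add_cancel_left)
      have h2: "\<And>p q. p + (x + q) = x + (p + (q::vec))"
        by (simp add: add.left_commute)
      have h3: "\<And>p q. (x + p) + q = x + (p + (q::vec))"
        by (simp add: add.assoc)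
      show ?thesis
      proof (cases "u \<in> lspan F")
        case True note uT = this
        show ?thesis
        proof (cases "v \<in> lspan F")
          case True thus ?thesis using uT lin_add[OF L] by blast
        next
          case False then obtain q where "q \<in> lspan F" "v = x + q" using v by blast
          thus ?thesis using uT h2 lin_add[OF L] by auto
        qed
      next
        case False then obtain p where p: "p \<in> lspan F" "u = x + p" using u by blast
        show ?thesis
        proof (cases "v \<in> lspan F")
          case True thus ?thesis using p h3 lin_add[OF L] by auto
        next
          case False then obtain q where "q \<in> lspan F" "v = x + q" using v by blast
          thus ?thesis using p h1 lin_add[OF L] by auto
        qed
      qed
    qed
  qed
  moreover have "insert x F \<subseteq> ?R"
  proof -
    have "x = x + 0" by simp
    hence "x \<in> ?R" using lin_0[OF lin_lspan] by blast
    thus ?thesis using lspan_sup by blast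
  qed
  ultimately show "lspan (insert x F) \<subseteq> ?R" by (rule lspan_least)
next
  have "lspan F \<subseteq> lspan (insert x F)" by (rule lspan_mono) auto
  moreover have "(\<lambda>y. x + y) ` lspan F \<subseteq> lspan (insert x F)"
  proof
    fix z assume "z \<in> (\<lambda>y. x + y) ` lspan F"
    then obtain y where y: "y \<in> lspan F" "z = x + y" by blast
    have "x \<in> lspan (insert x F)" using lspan_sup by blast
    moreover have "y \<in> lspan (insert x F)" using y \<open>lspan F \<subseteq> lspan (insert x F)\<close> by blast
    ultimately show "z \<in> lspan (insert x F)" using y lin_add[OF lin_lspan] by simp
  qed
  ultimately show "lspan F \<union> (\<lambda>y. x + y) ` lspan F \<subseteq> lspan (insert x F)" by blast
qed

lemma inj_trans: "inj_on (\<lambda>y. (x::vec) + y) A"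
  by (rule inj_onI) (metis add_cancel_left)

lemma card_trans: "card ((\<lambda>y. (x::vec) + y) ` A) = card A"
  by (rule card_image[OF inj_trans])

lemma lspan_empty: "lspan {} = {0}"
proof -
  have "lin {0}" by (simp add: lin_def)
  hence "lspan {} \<subseteq> {0}" by (rule lspan_least) simp
  moreover have "0 \<in> lspan {}" by (rule lin_0[OF lin_lspan])
  ultimately show ?thesis by auto
qed

lemma lspan_pow2: "finite F \<Longrightarrow> finite (lspan F) \<and> (\<exists>k. card (lspan F) = 2 ^ k)"
proof (induction F rule: finite_induct)
  case empty
  show ?case unfolding lspan_empty by (rule conjI, simp, rule exI[of _ 0], simp)
next
  case (insert x F)
  then obtain k where k: "card (lspan F) = 2 ^ k" and fin: "finite (lspan F)" by blast
  show ?case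
  proof (cases "x \<in> lspan F")
    case True
    have "(\<lambda>y. x + y) ` lspan F \<subseteq> lspan F"
    proof
      fix z assume "z \<in> (\<lambda>y. x + y) ` lspan F"
      then obtain y where "y \<in> lspan F" "z = x + y" by blast
      thus "z \<in> lspan F" using True lin_add[OF lin_lspan] by simp
    qed
    hence "lspan (insert x F) = lspan F" unfolding lspan_insert by (rule Un_absorb2)
    thus ?thesis using k fin by auto
  next
    case False
    have d: "lspan F \<inter> (\<lambda>y. x + y) ` lspan F = {}"
    proof (rule ccontr)
      assume "\<not> ?thesis"
      then obtain y where y: "y \<in> lspan F" "x + y \<in> lspan F" by blast
      have "x = (x + y) + y" by (simp add: add.assoc)
      hence "x \<in> lspan F" using y lin_add[OF lin_lspan] by metis
      thus False using False by contradiction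
    qed
    have fin2: "finite ((\<lambda>y. x + y) ` lspan F)" using fin by simp
    have "card (lspan (insert x F)) = card (lspan F) + card ((\<lambda>y. x + y) ` lspan F)"
      unfolding lspan_insert by (rule card_Un_disjoint[OF fin fin2 d])
    also have "\<dots> = 2 ^ Suc k" using k card_trans[of x "lspan F"] by simp
    finally show ?thesis using fin fin2 unfolding lspan_insert by blast
  qed
qed

lemma lin_pow2: "lin L \<Longrightarrow> finite L \<Longrightarrow> \<exists>k. card L = 2 ^ k"
  using lspan_pow2 lspan_lin by metis

lemma finite_vecs: "finite (vecs n)"
proof -
  have "vecs n \<subseteq> (\<lambda>S i. if i \<in> S then (1::bit) else 0) ` Pow {0..n}"
  proof
    fix x assume x: "x \<in> vecs n"
    have "x = (\<lambda>i. if i \<in> {i\<in>{0..n}. x i = 1} then 1 else 0)"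
      using x bit_cases2 unfolding vecs_def by (auto intro!: ext)
    thus "x \<in> (\<lambda>S i. if i \<in> S then (1::bit) else 0) ` Pow {0..n}" by blast
  qed
  thus ?thesis by (rule finite_subset) simp
qed

lemma lin_vecs: "lin (vecs n)"
  unfolding lin_def vecs_def by (simp add: plus_fun_def)

lemma points_eq: "points n = vecs n - {0}"
  unfolding points_def by (simp add: zero_fun_def)



lemma lin_perp: "lin {v. \<forall>f\<in>F. bform n cf v f = 0}"
  unfolding lin_def by (simp add: bform_add1)

lemma lin_perp1: "lin {v. bform n cf u v = 0}"
  unfolding lin_def by (simp add: bform_add2)

lemma lin_Int: "lin A \<Longrightarrow> lin B \<Longrightarrow> lin (A \<inter> B)"
  unfolding lin_def by blast

lemma span_ts:
  assumes F: "F \<subseteq> vecs n" and q: "\<forall>x\<in>F. qform n cf x = 0"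
    and b: "\<forall>x\<in>F. \<forall>y\<in>F. bform n cf x y = 0"
  shows "lspan F \<subseteq> vecs n" "\<forall>x\<in>lspan F. qform n cf x = 0"
    "\<forall>x\<in>lspan F. \<forall>y\<in>lspan F. bform n cf x y = 0"
proof -
  show "lspan F \<subseteq> vecs n" using lspan_least[OF lin_vecs F] .
  have "F \<subseteq> {v. \<forall>f\<in>F. bform n cf v f = 0}" using b by blast
  hence s1: "lspan F \<subseteq> {v. \<forall>f\<in>F. bform n cf v f = 0}" by (rule lspan_least[OF lin_perp])
  show b2: "\<forall>x\<in>lspan F. \<forall>y\<in>lspan F. bform n cf x y = 0"
  proof (intro ballI)
    fix x y assume x: "x \<in> lspan F" and y: "y \<in> lspan F"
    have "F \<subseteq> {v. bform n cf x v = 0}" using s1 x bform_sym by blast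
    hence "lspan F \<subseteq> {v. bform n cf x v = 0}" by (rule lspan_least[OF lin_perp1])
    thus "bform n cf x y = 0" using y by blast
  qed
  have "lin {v \<in> lspan F. qform n cf v = 0}"
    unfolding lin_def
  proof (intro conjI ballI)
    show "0 \<in> {v \<in> lspan F. qform n cf v = 0}" using lin_0[OF lin_lspan] by simp
    fix x y assume "x \<in> {v \<in> lspan F. qform n cf v = 0}" "y \<in> {v \<in> lspan F. qform n cf v = 0}"
    thus "x + y \<in> {v \<in> lspan F. qform n cf v = 0}"
      using b2 lin_add[OF lin_lspan] by (simp add: qform_add')
  qed
  moreover have "F \<subseteq> {v \<in> lspan F. qform n cf v = 0}" using q lspan_sup by blast
  ultimately have "lspan F \<subseteq> {v \<in> lspan F. qform n cf v = 0}" by (rule lspan_least)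
  thus "\<forall>x\<in>lspan F. qform n cf x = 0" by blast
qed

lemma is_subspace_lin:
  assumes "lin L" "L \<subseteq> vecs n"
  shows "is_subspace n (L - {0})"
  unfolding is_subspace_def points_eq vadd_eq
  using assms lin_add[OF assms(1)] add_eq_0_iff by auto

lemma lin_is_subspace:
  assumes "is_subspace n S"
  shows "lin (insert 0 S)"
  using assms unfolding is_subspace_def lin_def vadd_eq
  by (auto simp: add_eq_0_iff)

lemma ts_bound:
  assumes pi: "proj_index n cf g" and L: "lin L" "L \<subseteq> vecs n" and q: "\<forall>x\<in>L. qform n cf x = 0"
  shows "card L \<le> 2 ^ (g + 1)"
proof -
  have fin: "finite L" using L(2) finite_vecs finite_subset by blast
  obtain k where k: "card L = 2 ^ k" using lin_pow2[OF L(1) fin] by blast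
  show ?thesis
  proof (cases k)
    case 0 thus ?thesis using k by simp
  next
    case (Suc m)
    have c: "card (L - {0}) = 2 ^ (m + 1) - 1" using k Suc fin lin_0[OF L(1)] by simp
    have "L - {0} \<subseteq> quadric n cf" unfolding quadric_def points_eq using L(2) q by auto
    hence "subspace_dim n (L - {0}) m \<and> L - {0} \<subseteq> quadric n cf"
      unfolding subspace_dim_def using is_subspace_lin[OF L] c by simp
    hence "m \<le> g" using pi unfolding proj_index_def by blast
    thus ?thesis using k Suc by simp
  qed
qed

lemma pspan_eq:
  assumes "A \<subseteq> points n"
  shows "pspan n A = lspan A - {0}"
proof -
  have Av: "A \<subseteq> vecs n" using assms points_eq by auto
  have s: "is_subspace n (lspan A - {0})"
    by (rule is_subspace_lin[OF lin_lspan lspan_least[OF lin_vecs Av]])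
  have A0: "A \<subseteq> lspan A - {0}" using lspan_sup assms points_eq by blast
  have "pspan n A \<subseteq> lspan A - {0}" unfolding pspan_def using s A0 by blast
  moreover have "lspan A - {0} \<subseteq> pspan n A"
    unfolding pspan_def
  proof (rule Inter_greatest)
    fix S assume "S \<in> {S. is_subspace n S \<and> A \<subseteq> S}"
    hence S: "is_subspace n S" "A \<subseteq> S" by auto
    have "lspan A \<subseteq> insert 0 S" using lspan_least[OF lin_is_subspace[OF S(1)]] S(2) by blast
    thus "lspan A - {0} \<subseteq> S" by blast
  qed
  ultimately show ?thesis by blast
qed

lemma index2:
  assumes "lin H" "H \<subseteq> G" "x \<in> G" "x \<notin> H" "lin G" "finite G"
  shows "2 * card H \<le> card G"
proof -
  have d: "H \<inter> (\<lambda>y. x + y) ` H = {}"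
    using assms(1,4) lin_sub by (auto simp: add.commute)
  have sub: "H \<union> (\<lambda>y. x + y) ` H \<subseteq> G" using assms lin_add by blast
  have fH: "finite H" using assms(2,6) finite_subset by blast
  have "card (H \<union> (\<lambda>y. x + y) ` H) = 2 * card H"
    using card_Un_disjoint[OF fH _ d] fH card_trans by simp
  thus ?thesis using card_mono[OF assms(6) sub] by simp
qed

lemma kernel2:
  assumes L: "lin L" "finite L" and u0: "u0 \<in> L" "bform n cf v u0 = 1"
  shows "card L = 2 * card {u\<in>L. bform n cf v u = 0}"
proof -
  let ?K = "{u\<in>L. bform n cf v u = 0}"
  have eq: "L = ?K \<union> (\<lambda>y. u0 + y) ` ?K"
  proof
    show "L \<subseteq> ?K \<union> (\<lambda>y. u0 + y) ` ?K"
    proof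
      fix u assume u: "u \<in> L"
      show "u \<in> ?K \<union> (\<lambda>y. u0 + y) ` ?K"
      proof (cases "bform n cf v u = 0")
        case True thus ?thesis using u by blast
      next
        case False
        hence "bform n cf v u = 1" using bit_cases2 by blast
        hence "bform n cf v (u0 + u) = 0" using u0 by (simp add: bform_add2)
        moreover have "u0 + u \<in> L" using u u0 lin_add[OF L(1)] by blast
        moreover have "u = u0 + (u0 + u)" by simp
        ultimately show ?thesis by blast
      qed
    qed
    show "?K \<union> (\<lambda>y. u0 + y) ` ?K \<subseteq> L" using u0 lin_add[OF L(1)] by blast
  qed
  have d: "?K \<inter> (\<lambda>y. u0 + y) ` ?K = {}"
    using u0 by (auto simp: bform_add2)
  have fK: "finite ?K" using L(2) by simp
  have "card L = card ?K + card ((\<lambda>y. u0 + y) ` ?K)"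
    by (subst eq, rule card_Un_disjoint[OF fK _ d]) (use fK in simp)
  thus ?thesis using card_trans by simp
qed



lemma card_filter_sum: "finite A \<Longrightarrow> card {a\<in>A. P a} = (\<Sum>a\<in>A. if P a then 1 else (0::nat))"
  by (simp add: sum.If_cases Int_def conj_commute)

lemma halfcount:
  assumes A: "lin A" "finite A" and S: "finite S"
  shows "2 * (\<Sum>s\<in>S. card {a\<in>A. bform n cf s a = 0})
         = card A * card S + card A * card {s\<in>S. \<forall>a\<in>A. bform n cf s a = 0}"
proof -
  let ?P = "\<lambda>s. \<forall>a\<in>A. bform n cf s a = 0"
  have each: "2 * card {a\<in>A. bform n cf s a = 0} = card A + (if ?P s then card A else 0)" for s
  proof (cases "?P s")
    case True
    hence "{a\<in>A. bform n cf s a = 0} = A" by blast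
    thus ?thesis using True by simp
  next
    case False
    then obtain a0 where "a0 \<in> A" "bform n cf s a0 \<noteq> 0" by blast
    hence "a0 \<in> A" "bform n cf s a0 = 1" using bit_cases2 by blast+
    from kernel2[OF A this] have c: "card A = 2 * card {a\<in>A. bform n cf s a = 0}" .
    show ?thesis by (subst if_not_P[OF False]) (simp add: c)
  qed
  have "2 * (\<Sum>s\<in>S. card {a\<in>A. bform n cf s a = 0}) = (\<Sum>s\<in>S. 2 * card {a\<in>A. bform n cf s a = 0})"
    by (simp add: sum_distrib_left)
  also have "\<dots> = (\<Sum>s\<in>S. card A + (if ?P s then card A else 0))" using each by simp
  also have "\<dots> = card A * card S + (\<Sum>s\<in>S. if ?P s then card A else 0)"
    by (simp add: sum.distrib)
  also have "(\<Sum>s\<in>S. if ?P s then card A else 0) = card A * (\<Sum>s\<in>S. if ?P s then 1 else 0)"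
    by (simp add: sum_distrib_left if_distrib del: mult_1_right mult_0_right) (rule sum.cong, simp_all)
  also have "(\<Sum>s\<in>S. if ?P s then 1 else (0::nat)) = card {s\<in>S. ?P s}"
    using card_filter_sum[OF S, of ?P] by simp
  finally show ?thesis .
qed

lemma duality:
  assumes S: "lin S" "finite S" and A: "lin A" "finite A"
  shows "card S * card {a\<in>A. \<forall>s\<in>S. bform n cf s a = 0}
       = card A * card {s\<in>S. \<forall>a\<in>A. bform n cf s a = 0}"
proof -
  have swap: "(\<Sum>s\<in>S. card {a\<in>A. bform n cf s a = 0}) = (\<Sum>a\<in>A. card {s\<in>S. bform n cf a s = 0})"
  proof -
    have "(\<Sum>s\<in>S. card {a\<in>A. bform n cf s a = 0})
        = (\<Sum>s\<in>S. \<Sum>a\<in>A. if bform n cf s a = 0 then 1 else (0::nat))"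
      using card_filter_sum[OF A(2)] by simp
    also have "\<dots> = (\<Sum>a\<in>A. \<Sum>s\<in>S. if bform n cf s a = 0 then 1 else (0::nat))"
      by (rule sum.swap)
    also have "\<dots> = (\<Sum>a\<in>A. card {s\<in>S. bform n cf a s = 0})"
      using card_filter_sum[OF S(2)] bform_sym by simp
    finally show ?thesis .
  qed
  note h1 = halfcount[OF A S(2), of n cf]
  note h2 = halfcount[OF S A(2), of n cf]
  have e: "{a\<in>A. \<forall>s\<in>S. bform n cf a s = 0} = {a\<in>A. \<forall>s\<in>S. bform n cf s a = 0}"
    using bform_sym by metis
  from h1 h2 swap e show ?thesis by (simp add: mult.commute)
qed


lemma quadric_iff: "x \<in> quadric n cf \<longleftrightarrow> x \<in> vecs n \<and> x \<noteq> 0 \<and> qform n cf x = 0"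
  unfolding quadric_def points_eq by auto

lemma quadric_vecs: "quadric n cf \<subseteq> vecs n" using quadric_iff by blast

lemma finite_quadric: "finite (quadric n cf)"
  using finite_subset[OF quadric_vecs finite_vecs] .

definition type3 :: "nat \<Rightarrow> (nat \<Rightarrow> nat \<Rightarrow> bit) \<Rightarrow> vec set \<Rightarrow> vec \<Rightarrow> bool" where
  "type3 n cf \<alpha> R \<longleftrightarrow> R \<in> quadric n cf \<and> (\<exists>c\<in>\<alpha>. bform n cf R c = 1)"

locale setting =
  fixes n :: nat and cf :: "nat \<Rightarrow> nat \<Rightarrow> bit" and \<alpha> :: "vec set"
  assumes al_sub: "is_subspace n \<alpha>" and al_q: "\<alpha> \<subseteq> quadric n cf"
begin

abbreviation "Q \<equiv> qform n cf"
abbreviation "B \<equiv> bform n cf"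
abbreviation "A0 \<equiv> insert 0 \<alpha>"

lemma al_vecs: "\<alpha> \<subseteq> vecs n" using al_q quadric_vecs by blast
lemma al_ne0: "0 \<notin> \<alpha>" using al_q quadric_iff by blast
lemma al_Q: "c \<in> \<alpha> \<Longrightarrow> Q c = 0" using al_q quadric_iff by blast

lemma al_ts: "c \<in> \<alpha> \<Longrightarrow> c' \<in> \<alpha> \<Longrightarrow> B c c' = 0"
proof (cases "c = c'")
  case False
  assume c: "c \<in> \<alpha>" "c' \<in> \<alpha>"
  hence "c + c' \<in> \<alpha>" using al_sub False unfolding is_subspace_def vadd_eq by blast
  hence "Q (c + c') = 0" by (rule al_Q)
  thus ?thesis using al_Q[OF c(1)] al_Q[OF c(2)] by (simp add: qform_add')
qed simp

lemma A0_lin: "lin A0" using lin_is_subspace[OF al_sub] .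
lemma A0_vecs: "A0 \<subseteq> vecs n" using al_vecs lin_0[OF lin_vecs] by blast
lemma A0_ts: "c \<in> A0 \<Longrightarrow> c' \<in> A0 \<Longrightarrow> B c c' = 0" using al_ts by auto
lemma A0_Q: "c \<in> A0 \<Longrightarrow> Q c = 0" using al_Q by auto

lemma adj_iff: "adj n cf X Y \<longleftrightarrow> X \<in> quadric n cf \<and> Y \<in> quadric n cf \<and> X \<noteq> Y \<and> B X Y = 0"
proof (cases "X \<in> quadric n cf \<and> Y \<in> quadric n cf \<and> X \<noteq> Y")
  case True
  hence XY: "{X, Y} \<subseteq> points n" unfolding quadric_def by blast
  have ps: "pspan n {X, Y} = lspan {X, Y} - {0}" by (rule pspan_eq[OF XY])
  show ?thesis
  proof
    assume "adj n cf X Y"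
    hence sub: "lspan {X, Y} - {0} \<subseteq> quadric n cf" unfolding adj_def ps by blast
    have "X + Y \<in> lspan {X, Y}" using lin_add[OF lin_lspan] lspan_sup by blast
    moreover have "X + Y \<noteq> 0" using True add_eq_0_iff by blast
    ultimately have "Q (X + Y) = 0" using sub quadric_iff by blast
    thus "X \<in> quadric n cf \<and> Y \<in> quadric n cf \<and> X \<noteq> Y \<and> B X Y = 0"
      using True quadric_iff by (simp add: qform_add')
  next
    assume h: "X \<in> quadric n cf \<and> Y \<in> quadric n cf \<and> X \<noteq> Y \<and> B X Y = 0"
    have F: "{X, Y} \<subseteq> vecs n" "\<forall>x\<in>{X, Y}. Q x = 0" "\<forall>x\<in>{X,Y}. \<forall>y\<in>{X,Y}. B x y = 0"
      using h quadric_iff bform_sym by auto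
    have "lspan {X, Y} - {0} \<subseteq> quadric n cf"
      using span_ts[OF F] quadric_iff by blast
    thus "adj n cf X Y" unfolding adj_def ps using h by blast
  qed
qed (auto simp: adj_def)

lemma Xs_iff: "X \<in> Xs n cf \<alpha> \<longleftrightarrow> X \<in> quadric n cf \<and> X \<notin> \<alpha> \<and> (\<forall>c\<in>\<alpha>. B X c = 0)"
proof (cases "X \<in> quadric n cf \<and> X \<notin> \<alpha>")
  case True
  hence Xa: "insert X \<alpha> \<subseteq> points n" using al_q unfolding quadric_def by blast
  have ps: "pspan n (insert X \<alpha>) = lspan (insert X \<alpha>) - {0}" by (rule pspan_eq[OF Xa])
  show ?thesis
  proof
    assume "X \<in> Xs n cf \<alpha>"
    hence "pspan n (insert X \<alpha>) \<subseteq> quadric n cf" unfolding Xs_def by blast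
    hence sub: "lspan (insert X \<alpha>) - {0} \<subseteq> quadric n cf" using ps by simp
    { fix c assume c: "c \<in> \<alpha>"
      have "X + c \<in> lspan (insert X \<alpha>)" using lin_add[OF lin_lspan] lspan_sup c by blast
      moreover have "X + c \<noteq> 0" using True c by (metis add_eq_0_iff)
      ultimately have "Q (X + c) = 0" using sub quadric_iff by blast
      hence "B X c = 0" using True quadric_iff al_Q[OF c] by (simp add: qform_add')
    }
    thus "X \<in> quadric n cf \<and> X \<notin> \<alpha> \<and> (\<forall>c\<in>\<alpha>. B X c = 0)" using True by blast
  next
    assume h: "X \<in> quadric n cf \<and> X \<notin> \<alpha> \<and> (\<forall>c\<in>\<alpha>. B X c = 0)"
    have F: "insert X \<alpha> \<subseteq> vecs n" "\<forall>x\<in>insert X \<alpha>. Q x = 0"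
      "\<forall>x\<in>insert X \<alpha>. \<forall>y\<in>insert X \<alpha>. B x y = 0"
      using h quadric_iff al_vecs al_Q al_ts bform_sym by auto
    have "lspan (insert X \<alpha>) - {0} \<subseteq> quadric n cf"
      using span_ts[OF F] quadric_iff by blast
    hence "pspan n (insert X \<alpha>) \<subseteq> quadric n cf" using ps by simp
    thus "X \<in> Xs n cf \<alpha>" unfolding Xs_def using h by blast
  qed
qed (auto simp: Xs_def)

lemma finite_Xs: "finite (Xs n cf \<alpha>)"
  using finite_subset[OF _ finite_quadric] Xs_iff by blast

lemma type3_not_Xs: "type3 n cf \<alpha> R \<Longrightarrow> R \<notin> Xs n cf \<alpha>"
  unfolding type3_def Xs_iff by auto

lemma type3_not_al: "type3 n cf \<alpha> R \<Longrightarrow> R \<notin> \<alpha>"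
  unfolding type3_def using al_ts by fastforce

lemma partition3: "R \<in> quadric n cf \<Longrightarrow> R \<in> \<alpha> \<or> R \<in> Xs n cf \<alpha> \<or> type3 n cf \<alpha> R"
  unfolding type3_def Xs_iff using bit_cases2 by blast

lemma Xs_shift:
  assumes X: "X \<in> Xs n cf \<alpha>" and c0: "c0 \<in> \<alpha>"
  shows "X + c0 \<in> Xs n cf \<alpha>"
proof -
  have X': "X \<in> quadric n cf" "X \<notin> \<alpha>" "\<forall>c\<in>\<alpha>. B X c = 0" using X Xs_iff by auto
  have v: "X + c0 \<in> vecs n" using X' quadric_iff al_vecs c0 lin_add[OF lin_vecs] by blast
  have nz: "X + c0 \<noteq> 0" using X'(2) c0 by (metis add_eq_0_iff)
  have q: "Q (X + c0) = 0" using X' c0 al_Q quadric_iff by (simp add: qform_add')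
  have na: "X + c0 \<notin> \<alpha>"
  proof
    assume "X + c0 \<in> \<alpha>"
    hence "(X + c0) + c0 \<in> A0" using A0_lin c0 lin_add by blast
    thus False using X' quadric_iff by simp
  qed
  have "\<forall>c\<in>\<alpha>. B (X + c0) c = 0" using X' c0 al_ts by (simp add: bform_add1)
  thus ?thesis using Xs_iff quadric_iff v nz q na by blast
qed

lemma type3_switched:
  assumes R: "type3 n cf \<alpha> R"
  shows "switched n cf \<alpha> R"
proof -
  obtain c0 where c0: "c0 \<in> \<alpha>" "B R c0 = 1" using R unfolding type3_def by blast
  let ?X = "Xs n cf \<alpha>"
  let ?N = "{X\<in>?X. adj n cf R X}"
  let ?M = "?X - ?N"
  have Rq: "R \<in> quadric n cf" using R type3_def by blast
  have RX: "R \<notin> ?X" by (rule type3_not_Xs[OF R])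
  have adjX: "X \<in> ?X \<Longrightarrow> adj n cf R X \<longleftrightarrow> B R X = 0" for X
    using adj_iff Rq RX Xs_iff by blast
  have f1: "(\<lambda>y. c0 + y) ` ?N \<subseteq> ?M"
  proof
    fix z assume "z \<in> (\<lambda>y. c0 + y) ` ?N"
    then obtain X where X: "X \<in> ?N" "z = c0 + X" by blast
    have "z \<in> ?X" using Xs_shift[of X c0] X c0 by (simp add: add.commute)
    moreover have "B R X = 0" using X adjX by blast
    hence "B R z = 1" using X c0 by (simp add: bform_add2)
    ultimately show "z \<in> ?M" using adjX by auto
  qed
  have f2: "(\<lambda>y. c0 + y) ` ?M \<subseteq> ?N"
  proof
    fix z assume "z \<in> (\<lambda>y. c0 + y) ` ?M"
    then obtain X where X: "X \<in> ?M" "z = c0 + X" by blast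
    have z: "z \<in> ?X" using Xs_shift[of X c0] X c0 by (simp add: add.commute)
    have "B R X = 1" using X adjX bit_cases2 by blast
    hence "B R z = 0" using X c0 by (simp add: bform_add2)
    thus "z \<in> ?N" using adjX z by auto
  qed
  have fin: "finite ?N" "finite ?M" using finite_Xs by auto
  have "card ?N \<le> card ?M" using card_mono[OF fin(2) f1] card_trans by metis
  moreover have "card ?M \<le> card ?N" using card_mono[OF fin(1) f2] card_trans by metis
  moreover have "card ?M = card ?X - card ?N"
    by (rule card_Diff_subset[OF fin(1)]) blast
  moreover have "card ?N \<le> card ?X" by (rule card_mono[OF finite_Xs]) blast
  ultimately have "2 * card ?N = card ?X" by simp
  moreover have "R \<in> Ys n cf \<alpha>" using Rq RX Ys_def by blast
  ultimately show ?thesis unfolding switched_def by blast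
qed

lemma switched_type3:
  assumes sw: "switched n cf \<alpha> U" and V: "V \<in> Xs n cf \<alpha>"
  shows "type3 n cf \<alpha> U"
proof -
  have U: "U \<in> quadric n cf" "U \<notin> Xs n cf \<alpha>" using sw unfolding switched_def Ys_def by auto
  have "U \<notin> \<alpha>"
  proof
    assume Ua: "U \<in> \<alpha>"
    have "{X \<in> Xs n cf \<alpha>. adj n cf U X} = Xs n cf \<alpha>"
    proof -
      { fix X assume X: "X \<in> Xs n cf \<alpha>"
        hence "B X U = 0" "X \<noteq> U" "X \<in> quadric n cf" using Ua Xs_iff by auto
        hence "adj n cf U X" using adj_iff U bform_sym by metis }
      thus ?thesis by blast
    qed
    hence "card (Xs n cf \<alpha>) = 0" using sw unfolding switched_def by simp
    thus False using V finite_Xs by auto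
  qed
  thus ?thesis using partition3[OF U(1)] U by blast
qed

lemma adj_s_iff:
  assumes U: "U \<in> quadric n cf" and V: "V \<in> quadric n cf" and d: "U \<noteq> V"
  shows "adj_s n cf \<alpha> U V \<longleftrightarrow>
    (if (type3 n cf \<alpha> U \<and> V \<in> Xs n cf \<alpha>) \<or> (type3 n cf \<alpha> V \<and> U \<in> Xs n cf \<alpha>)
     then B U V = 1 else B U V = 0)"
proof -
  have nadj: "\<not> adj n cf U V \<longleftrightarrow> B U V = 1" using adj_iff U V d bit_cases2 by auto
  have adj: "adj n cf U V \<longleftrightarrow> B U V = 0" using adj_iff U V d by auto
  have swU: "switched n cf \<alpha> U \<and> V \<in> Xs n cf \<alpha> \<longleftrightarrow> type3 n cf \<alpha> U \<and> V \<in> Xs n cf \<alpha>"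
    using switched_type3 type3_switched by blast
  have swV: "switched n cf \<alpha> V \<and> U \<in> Xs n cf \<alpha> \<longleftrightarrow> type3 n cf \<alpha> V \<and> U \<in> Xs n cf \<alpha>"
    using switched_type3 type3_switched by blast
  show ?thesis unfolding adj_s_def swU swV using nadj adj d by auto
qed

end


lemma add_pair: "((x::vec) + p) + (x + q) = p + q"
  by (metis add.assoc add.commute add_cancel_left)

lemma card_subset_eq': "finite B \<Longrightarrow> A \<subseteq> B \<Longrightarrow> card B \<le> card A \<Longrightarrow> A = B"
  using card_subset_eq card_mono antisym by metis

context setting begin

lemma lin_vecs_Q_sub_quadric: "L \<subseteq> vecs n \<Longrightarrow> \<forall>x\<in>L. Q x = 0 \<Longrightarrow> L - {0} \<subseteq> quadric n cf"
  using quadric_iff by blast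

lemma gen_of_lin:
  assumes "lin L" "L \<subseteq> vecs n" "\<forall>x\<in>L. Q x = 0" "card L = 2 ^ (g + 1)"
  shows "generator n cf g (L - {0})"
proof -
  have f: "finite L" using assms(2) finite_vecs finite_subset by blast
  have "card (L - {0}) = 2 ^ (g + 1) - 1" using assms(4) lin_0[OF assms(1)] f by simp
  thus ?thesis unfolding generator_def subspace_dim_def
    using is_subspace_lin[OF assms(1,2)] lin_vecs_Q_sub_quadric[OF assms(2,3)] by simp
qed

end

locale clq = setting +
  fixes g s :: nat and C :: "vec set"
  assumes pi: "proj_index n cf g" and g1: "g \<ge> 1" and sg: "s < g"
    and cal: "card \<alpha> = 2 ^ (s + 1) - 1"
    and cl: "clique_s n cf \<alpha> C" and cC: "card C = 2 ^ (g + 1) - 1"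
begin

abbreviation "P \<equiv> (2::nat) ^ (g + 1)"
abbreviation "C1 \<equiv> C \<inter> \<alpha>"
abbreviation "C2 \<equiv> C \<inter> Xs n cf \<alpha>"
abbreviation "C3 \<equiv> {R\<in>C. type3 n cf \<alpha> R}"

lemma cC': "card C + 1 = P" using cC by simp
lemma Cq: "C \<subseteq> quadric n cf" using cl clique_s_def by blast
lemma Cv: "C \<subseteq> vecs n" using Cq quadric_vecs by blast
lemma C0: "0 \<notin> C" using Cq quadric_iff by blast
lemma fC: "finite C" using finite_subset[OF Cq finite_quadric] .
lemma fal: "finite \<alpha>" using finite_subset[OF al_vecs finite_vecs] .
lemma cA0: "card A0 = 2 ^ (s + 1)" using cal al_ne0 fal by simp
lemma cA0P: "card A0 < P" unfolding cA0 using sg by simp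
lemma fA0: "finite A0" using fal by simp
lemma Cpart: "C = C1 \<union> C2 \<union> C3" using partition3 Cq by blast
lemma d12: "C1 \<inter> C2 = {}" using Xs_iff by blast
lemma d13: "C1 \<inter> C3 = {}" using type3_not_al by blast
lemma d23: "C2 \<inter> C3 = {}" using type3_not_Xs by blast
lemma cardC: "card C = card C1 + card C2 + card C3"
proof -
  have f: "finite C1" "finite C2" "finite C3" using fC by auto
  have "card (C1 \<union> C2 \<union> C3) = card (C1 \<union> C2) + card C3"
    by (rule card_Un_disjoint) (use f d13 d23 in auto)
  also have "card (C1 \<union> C2) = card C1 + card C2" by (rule card_Un_disjoint) (use f d12 in auto)
  finally show ?thesis using Cpart by simp
qed
lemma orth0: assumes "U \<in> C" "V \<in> C" "\<not> (U \<in> C2 \<and> V \<in> C3)" "\<not> (U \<in> C3 \<and> V \<in> C2)"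
  shows "B U V = 0"
proof (cases "U = V")
  case False
  have a: "adj_s n cf \<alpha> U V" using cl assms False unfolding clique_s_def by blast
  have cond: "\<not> ((type3 n cf \<alpha> U \<and> V \<in> Xs n cf \<alpha>) \<or> (type3 n cf \<alpha> V \<and> U \<in> Xs n cf \<alpha>))"
    using assms by blast
  have q: "U \<in> quadric n cf" "V \<in> quadric n cf" using assms Cq by auto
  show ?thesis using adj_s_iff[OF q False, unfolded if_not_P[OF cond]] a by blast
qed simp
lemma orth1: assumes "U \<in> C2" "V \<in> C3" shows "B U V = 1"
proof -
  have ne: "U \<noteq> V" using assms d23 by blast
  have UV: "U \<in> C" "V \<in> C" using assms by auto
  have "adj_s n cf \<alpha> U V" using cl UV ne unfolding clique_s_def by blast
  moreover have cond: "(type3 n cf \<alpha> U \<and> V \<in> Xs n cf \<alpha>) \<or> (type3 n cf \<alpha> V \<and> U \<in> Xs n cf \<alpha>)"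
    using assms by blast
  have q: "U \<in> quadric n cf" "V \<in> quadric n cf" using UV Cq by auto
  ultimately show ?thesis using adj_s_iff[OF q ne, unfolded if_P[OF cond]] by blast
qed
lemma CQ: "U \<in> C \<Longrightarrow> Q U = 0" using Cq quadric_iff by blast

lemma fill:
  assumes L: "lin L" "L \<subseteq> vecs n" "\<forall>x\<in>L. Q x = 0" and sub: "insert 0 C \<subseteq> L"
  shows "L = insert 0 C"
proof -
  have fL: "finite L" using L(2) finite_vecs finite_subset by blast
  have "card L \<le> P" by (rule ts_bound[OF pi L])
  moreover have "card (insert 0 C) = P" using cC' C0 fC by simp
  ultimately show ?thesis using card_subset_eq'[OF fL sub] by simp
qed

lemma caseI: assumes C3e: "C3 = {}" shows "classA n cf g \<alpha> C"
proof -
  let ?F = "C \<union> \<alpha>"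
  have Fv: "?F \<subseteq> vecs n" using Cv al_vecs by blast
  have FQ: "\<forall>x\<in>?F. Q x = 0" using CQ al_Q by blast
  have CA: "B u c = 0" if "u \<in> C" "c \<in> \<alpha>" for u c
  proof -
    have "u \<in> C1 \<or> u \<in> C2" using that Cpart C3e by blast
    thus ?thesis using that al_ts Xs_iff by blast
  qed
  have FB: "\<forall>x\<in>?F. \<forall>y\<in>?F. B x y = 0"
  proof (intro ballI)
    fix x y assume xy: "x \<in> ?F" "y \<in> ?F"
    have n3: "x \<notin> C3" "y \<notin> C3" using C3e by auto
    show "B x y = 0"
    proof (cases "x \<in> C")
      case True
      show ?thesis
      proof (cases "y \<in> C")
        case True thus ?thesis using orth0[OF \<open>x \<in> C\<close> True] n3 by blast
      next
        case False thus ?thesis using xy \<open>x \<in> C\<close> CA by blast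
      qed
    next
      case False
      hence xa: "x \<in> \<alpha>" using xy by blast
      show ?thesis
      proof (cases "y \<in> C")
        case True thus ?thesis using xa CA bform_sym by metis
      next
        case False thus ?thesis using xy xa al_ts by blast
      qed
    qed
  qed
  note sp = span_ts[OF Fv FQ FB]
  have "insert 0 C \<subseteq> lspan ?F" using lspan_sup lin_0[OF lin_lspan] by blast
  hence L: "lspan ?F = insert 0 C" using fill[OF lin_lspan sp(1,2)] by blast
  have "\<alpha> \<subseteq> insert 0 C" using lspan_sup[of ?F] unfolding L by blast
  hence "\<alpha> \<subseteq> C" using al_ne0 by blast
  moreover have "generator n cf g C"
  proof -
    have "generator n cf g (lspan ?F - {0})"
      by (rule gen_of_lin[OF lin_lspan sp(1,2)]) (use L cC' C0 fC in simp)
    thus ?thesis using L C0 by simp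
  qed
  ultimately show ?thesis unfolding classA_def by blast
qed

lemma caseII: assumes C3ne: "C3 \<noteq> {}" and C2e: "C2 = {}" shows False
proof -
  have FB: "\<forall>x\<in>C. \<forall>y\<in>C. B x y = 0"
  proof (intro ballI)
    fix x y assume "x \<in> C" "y \<in> C"
    moreover have "x \<notin> C2" "y \<notin> C2" using C2e by auto
    ultimately show "B x y = 0" using orth0[of x y] by blast
  qed
  have FQ: "\<forall>x\<in>C. Q x = 0" using CQ by blast
  note sp = span_ts[OF Cv FQ FB]
  let ?L = "lspan C"
  have "insert 0 C \<subseteq> ?L" using lspan_sup lin_0[OF lin_lspan] by blast
  hence L: "?L = insert 0 C" using fill[OF lin_lspan sp(1,2)] by blast
  have fL: "finite ?L" using L fC by simp
  have cL: "card ?L = P" using L cC' C0 fC by simp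
  let ?Z = "{a\<in>A0. \<forall>s\<in>?L. B s a = 0}"
  let ?G = "{s\<in>?L. \<forall>a\<in>A0. B s a = 0}"
  have du: "card ?L * card ?Z = card A0 * card ?G"
    by (rule duality[OF lin_lspan fL A0_lin fA0])
  have GZ: "?G \<subseteq> ?Z"
  proof
    fix x assume x: "x \<in> ?G"
    have "x \<in> A0"
    proof (cases "x = 0")
      case False
      hence xC: "x \<in> C" using x L by blast
      have "\<not> type3 n cf \<alpha> x" using x unfolding type3_def by fastforce
      moreover have "x \<notin> Xs n cf \<alpha>" using C2e xC by blast
      moreover have "x \<in> quadric n cf" using xC Cq by blast
      ultimately show ?thesis using partition3[of x] by blast
    qed simp
    moreover have "\<forall>s\<in>?L. B s x = 0"
    proof
      fix s assume "s \<in> ?L"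
      moreover have "x \<in> ?L" using x by blast
      ultimately show "B s x = 0" using sp(3) by blast
    qed
    ultimately show "x \<in> ?Z" by blast
  qed
  have fZ: "finite ?Z" using fA0 by simp
  have "card ?G \<le> card ?Z" by (rule card_mono[OF fZ GZ])
  hence "card A0 * card ?G \<le> card A0 * card ?Z" by (rule mult_le_mono2)
  hence "P * card ?Z \<le> card A0 * card ?Z" using du cL by simp
  moreover have "card ?Z \<ge> 1"
  proof -
    have "0 \<in> ?Z" by simp
    hence "card ?Z \<noteq> 0" using fZ by auto
    thus ?thesis by simp
  qed
  ultimately have "P \<le> card A0" by simp
  thus False using cA0P by simp
qed

end

locale clq3 = clq +
  fixes X0 R0 assumes X0C2: "X0 \<in> C2" and R0C3: "R0 \<in> C3"
begin

abbreviation "F \<equiv> C1 \<union> C3 \<union> (\<lambda>y. X0 + y) ` C2"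
abbreviation "S \<equiv> lspan F"
abbreviation "S0 \<equiv> S \<inter> {v. B X0 v = 0}"
abbreviation "G \<equiv> S \<inter> {v. \<forall>f\<in>A0. B v f = 0}"

lemma X0: "X0 \<in> C" "X0 \<in> quadric n cf" "Q X0 = 0" "X0 \<notin> \<alpha>" "\<forall>c\<in>\<alpha>. B X0 c = 0" "X0 \<in> vecs n"
  "X0 \<noteq> 0"
  using X0C2 Xs_iff quadric_iff by auto
lemma R0: "R0 \<in> C" "R0 \<in> quadric n cf" "\<exists>c\<in>\<alpha>. B R0 c = 1"
  using R0C3 type3_def by auto
lemma BX0R0: "B X0 R0 = 1" using orth1 X0C2 R0C3 by blast

lemma sameX: assumes "u \<in> C" "X \<in> C2" shows "B u X = B u X0"
proof -
  have XC: "X \<in> C" using assms by blast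
  have "u \<in> C1 \<or> u \<in> C2 \<or> u \<in> C3" using assms Cpart by blast
  moreover have "u \<in> C1 \<Longrightarrow> B u X = 0 \<and> B u X0 = 0"
  proof -
    assume u: "u \<in> C1"
    have "u \<notin> C2" "u \<notin> C3" using u d12 d13 by blast+
    thus ?thesis using orth0[OF assms(1) XC] orth0[OF assms(1) X0(1)] by blast
  qed
  moreover have "u \<in> C2 \<Longrightarrow> B u X = 0 \<and> B u X0 = 0"
  proof -
    assume u: "u \<in> C2"
    have "u \<notin> C3" "X \<notin> C3" "X0 \<notin> C3" using u assms X0C2 d23 by blast+
    thus ?thesis using orth0[OF assms(1) XC] orth0[OF assms(1) X0(1)] by blast
  qed
  moreover have "u \<in> C3 \<Longrightarrow> B u X = 1 \<and> B u X0 = 1"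
  proof -
    assume u: "u \<in> C3"
    have "B X u = 1" "B X0 u = 1" using orth1[OF assms(2) u] orth1[OF X0C2 u] by auto
    thus ?thesis using bform_sym[of n cf X u] bform_sym[of n cf X0 u] by simp
  qed
  ultimately show ?thesis by auto
qed

lemma perpC: "u \<in> C \<Longrightarrow> X \<in> C2 \<Longrightarrow> B u (X0 + X) = 0"
  using sameX by (simp add: bform_add2)

lemma F_v: "F \<subseteq> vecs n"
proof -
  have "(\<lambda>y. X0 + y) ` C2 \<subseteq> vecs n" using X0 Cv lin_add[OF lin_vecs] by blast
  thus ?thesis using Cv by blast
qed

lemma F_Q: "\<forall>x\<in>F. Q x = 0"
proof
  fix x assume x: "x \<in> F"
  show "Q x = 0"
  proof (cases "x \<in> C")
    case True thus ?thesis using CQ by blast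
  next
    case False
    then obtain X where X: "X \<in> C2" "x = X0 + X" using x by blast
    have "X \<in> C" "X \<notin> C3" "X0 \<notin> C3" using X X0C2 d23 by blast+
    hence "B X0 X = 0" using orth0[OF X0(1)] by blast
    thus ?thesis using X CQ X0 by (simp add: qform_add')
  qed
qed

lemma F_B: "\<forall>x\<in>F. \<forall>y\<in>F. B x y = 0"
proof (intro ballI)
  fix x y assume x: "x \<in> F" and y: "y \<in> F"
  have pC: "B u v = 0" if "u \<in> C1 \<union> C3" "v \<in> C1 \<union> C3" for u v
  proof -
    have "u \<in> C" "v \<in> C" "u \<notin> C2" "v \<notin> C2" using that d12 d23 by blast+
    thus ?thesis using orth0[of u v] by blast
  qed
  have pX: "B u v = 0" if hu: "u \<in> C1 \<union> C3" and hv: "v \<in> (\<lambda>y. X0 + y) ` C2" for u v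
  proof -
    obtain X where "X \<in> C2" "v = X0 + X" using hv by blast
    moreover have "u \<in> C" using hu by blast
    ultimately show ?thesis using perpC by blast
  qed
  have pXX: "B u v = 0" if hu: "u \<in> (\<lambda>y. X0 + y) ` C2" and hv: "v \<in> (\<lambda>y. X0 + y) ` C2" for u v
  proof -
    obtain X Y where XY: "X \<in> C2" "Y \<in> C2" "u = X0 + X" "v = X0 + Y" using hu hv by blast
    have "B X0 v = 0" "B X v = 0" using perpC[of X0 Y] perpC[of X Y] XY X0 by auto
    thus ?thesis using XY by (simp add: bform_add1)
  qed
  show "B x y = 0"
  proof (cases "x \<in> C1 \<union> C3")
    case True
    show ?thesis
    proof (cases "y \<in> C1 \<union> C3")
      case True thus ?thesis using pC \<open>x \<in> C1 \<union> C3\<close> by blast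
    next
      case False thus ?thesis using pX[of x y] \<open>x \<in> C1 \<union> C3\<close> y by blast
    qed
  next
    case False
    hence x': "x \<in> (\<lambda>y. X0 + y) ` C2" using x by blast
    show ?thesis
    proof (cases "y \<in> C1 \<union> C3")
      case True thus ?thesis using pX[of y x] x' bform_sym by metis
    next
      case False thus ?thesis using pXX[of x y] x' y by blast
    qed
  qed
qed

lemmas sp = span_ts[OF F_v F_Q F_B]

lemma fS: "finite S" by (rule finite_subset[OF sp(1) finite_vecs])
lemma cS: "card S \<le> P" by (rule ts_bound[OF pi lin_lspan sp(1,2)])
lemma R0S: "R0 \<in> S"
proof -
  have "R0 \<in> F" using R0C3 by blast
  thus ?thesis using lspan_sup[of F] by blast
qed
lemma X0S: "X0 \<notin> S"
proof
  assume "X0 \<in> S"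
  hence "B X0 R0 = 0" using R0S sp(3) by blast
  thus False using BX0R0 by simp
qed
lemma linS0: "lin S0" by (rule lin_Int[OF lin_lspan lin_perp1])
lemma linG: "lin G" by (rule lin_Int[OF lin_lspan lin_perp])
lemma cS0: "card S = 2 * card S0"
proof -
  have "card S = 2 * card {u\<in>S. B X0 u = 0}" by (rule kernel2[OF lin_lspan fS R0S BX0R0])
  moreover have "{u\<in>S. B X0 u = 0} = S0" by blast
  ultimately show ?thesis by simp
qed
lemma C3S: "C3 \<subseteq> S" "C3 \<inter> S0 = {}" "C3 \<inter> G = {}"
proof -
  have "C3 \<subseteq> F" by blast
  thus "C3 \<subseteq> S" using lspan_sup[of F] by blast
  show "C3 \<inter> S0 = {}"
  proof (rule ccontr)
    assume "C3 \<inter> S0 \<noteq> {}"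
    then obtain x where "x \<in> C3" "B X0 x = 0" by blast
    thus False using orth1[OF X0C2] by force
  qed
  show "C3 \<inter> G = {}"
  proof (rule ccontr)
    assume "C3 \<inter> G \<noteq> {}"
    then obtain x where x: "x \<in> C3" "\<forall>f\<in>A0. B x f = 0" by blast
    then obtain c where "c \<in> \<alpha>" "B x c = 1" unfolding type3_def by blast
    thus False using x by force
  qed
qed
lemma C1S: "C1 \<subseteq> G \<inter> S0 \<inter> A0" "0 \<notin> C1"
proof -
  have "C1 \<subseteq> F" by blast
  hence "C1 \<subseteq> S" using lspan_sup[of F] by blast
  moreover have "C1 \<subseteq> {v. \<forall>f\<in>A0. B v f = 0}" using al_ts by auto
  moreover have "C1 \<subseteq> {v. B X0 v = 0}"
  proof
    fix v assume "v \<in> C1"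
    hence "B X0 v = 0" using X0(5) by blast
    thus "v \<in> {v. B X0 v = 0}" by simp
  qed
  ultimately show "C1 \<subseteq> G \<inter> S0 \<inter> A0" by blast
  show "0 \<notin> C1" using C0 by blast
qed
lemma C2S: "X \<in> C2 \<Longrightarrow> X0 + X \<in> G \<inter> S0"
proof -
  assume X: "X \<in> C2"
  have "X0 + X \<in> F" using X by blast
  hence "X0 + X \<in> S" using lspan_sup[of F] by blast
  moreover have "\<forall>f\<in>A0. B (X0 + X) f = 0" using X X0 Xs_iff by (auto simp: bform_add1)
  moreover have "B X0 (X0 + X) = 0" using perpC[of X0 X] X X0 by blast
  ultimately show ?thesis by blast
qed
lemma C2shift: "X \<in> C2 \<Longrightarrow> X = X0 + (X0 + X)" by simp
lemma alS: assumes "c \<in> \<alpha>" "B R0 c = 1" shows "c \<notin> S"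
proof
  assume "c \<in> S"
  hence "B R0 c = 0" using R0S sp(3) by blast
  thus False using assms by simp
qed
lemma G_ts: "x \<in> G \<Longrightarrow> y \<in> G \<Longrightarrow> B x y = 0" using sp(3) by blast
lemma G_sub: "G \<subseteq> S" by blast
lemma fG: "finite G" using fS by simp

lemma card_disj_le: "finite S' \<Longrightarrow> A \<subseteq> S' \<Longrightarrow> B' \<subseteq> S' \<Longrightarrow> A \<inter> B' = {} \<Longrightarrow> card A + card B' \<le> card S'"
  by (metis card_Un_disjoint card_mono finite_subset le_sup_iff)

lemma card_ins0: "finite L \<Longrightarrow> 0 \<in> L \<Longrightarrow> A \<subseteq> L \<Longrightarrow> 0 \<notin> A \<Longrightarrow> card A + 1 \<le> card L"
  by (metis Suc_eq_plus1 card_insert_disjoint card_mono finite_subset insert_subset)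

lemma C1card: "C1 \<subseteq> L \<Longrightarrow> finite L \<Longrightarrow> 0 \<in> L \<Longrightarrow> card C1 + 1 \<le> card L"
  using card_ins0 C0 by blast

lemma caseIIIa: assumes w: "w \<in> G" "B X0 w = 1" shows False
proof -
  let ?G0 = "G \<inter> {v. B X0 v = 0}"
  have linG0: "lin ?G0" by (rule lin_Int[OF linG lin_perp1])
  have fG0: "finite ?G0" using fG by simp
  have fS0: "finite S0" using fS by simp
  have cG: "card G = 2 * card ?G0"
  proof -
    have "card G = 2 * card {u\<in>G. B X0 u = 0}" by (rule kernel2[OF linG fG w])
    moreover have "{u\<in>G. B X0 u = 0} = ?G0" by blast
    ultimately show ?thesis by simp
  qed
  obtain c where c: "c \<in> \<alpha>" "B R0 c = 1" using R0 by blast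
  have wc: "B w c = 0" using w(1) c(1) by blast
  have Rw: "R0 + w \<in> S0"
  proof -
    have "R0 + w \<in> S" using lin_add[OF lin_lspan R0S] w(1) by blast
    moreover have "B X0 (R0 + w) = 0" using BX0R0 w(2) by (simp add: bform_add2)
    ultimately show ?thesis by blast
  qed
  have RwG: "R0 + w \<notin> ?G0"
  proof
    assume "R0 + w \<in> ?G0"
    hence "B (R0 + w) c = 0" using c(1) by blast
    thus False using c wc by (simp add: bform_add1)
  qed
  have i2: "2 * card ?G0 \<le> card S0"
    by (rule index2[OF linG0 _ Rw RwG linS0 fS0]) blast
  have h3: "card C3 + card (S0 \<union> G) \<le> card S"
    by (rule card_disj_le[OF fS]) (use C3S in auto)
  have un: "card (S0 \<union> G) + card ?G0 = card S0 + card G"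
  proof -
    have "S0 \<inter> G = ?G0" by blast
    thus ?thesis using card_Un_Int[OF fS0 fG] by simp
  qed
  have h1: "card C1 + 1 \<le> card ?G0"
    by (rule C1card[OF _ fG0]) (use C1S lin_0[OF linG0] in auto)
  have h2: "card C2 \<le> card ?G0"
  proof -
    have "(\<lambda>y. X0 + y) ` C2 \<subseteq> ?G0" using C2S by blast
    hence "card ((\<lambda>y. X0 + y) ` C2) \<le> card ?G0" by (rule card_mono[OF fG0])
    thus ?thesis using card_trans by metis
  qed
  show False using h1 h2 h3 un i2 cG cS0 cS cardC cC' by linarith
qed

lemma caseIIIb1: assumes GS0: "\<forall>w\<in>G. B X0 w = 0" and a: "a \<in> \<alpha>" "X0 + a \<in> G"
  shows "classB n cf g \<alpha> C"
proof -
  have fS0: "finite S0" using fS by simp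
  have Gv: "G \<subseteq> vecs n" using sp(1) by blast
  have av: "a \<in> vecs n" using a(1) al_vecs by blast
  have aA0: "a \<in> A0" using a(1) by blast
  have aperp: "\<forall>f\<in>A0. B a f = 0" using A0_ts[OF aA0] by blast
  have h3: "card C3 + card S0 \<le> card S"
    by (rule card_disj_le[OF fS]) (use C3S in auto)
  have aG: "a \<notin> G"
  proof
    assume "a \<in> G"
    hence "(X0 + a) + a \<in> G" by (rule lin_add[OF linG a(2)])
    thus False using X0S by simp
  qed
  let ?I = "(\<lambda>y. a + y) ` C2"
  have imgG: "?I \<subseteq> G"
  proof
    fix z assume "z \<in> ?I"
    then obtain X where X: "X \<in> C2" "z = a + X" by blast
    have "X0 + X \<in> G" using C2S[OF X(1)] by blast
    hence "(X0 + X) + (X0 + a) \<in> G" by (rule lin_add[OF linG _ a(2)])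
    moreover have "(X0 + X) + (X0 + a) = z" using X(2) add_pair by (simp add: add.commute)
    ultimately show "z \<in> G" by simp
  qed
  have imgA: "?I \<inter> A0 = {}"
  proof (rule ccontr)
    assume "?I \<inter> A0 \<noteq> {}"
    then obtain X where X: "X \<in> C2" "a + X \<in> A0" by blast
    have "a + (a + X) \<in> A0" by (rule lin_add[OF A0_lin aA0 X(2)])
    hence "X \<in> A0" by simp
    moreover have "X \<notin> \<alpha>" "X \<noteq> 0" using X(1) Xs_iff C0 by auto
    ultimately show False by simp
  qed
  let ?D = "C1 \<union> ?I"
  have fC2: "finite C2" using fC by simp
  have cD: "card ?D = card C1 + card C2"
  proof -
    have "C1 \<inter> ?I = {}" using imgA by blast
    hence "card ?D = card C1 + card ?I" by (rule card_Un_disjoint[rotated 2]) (use fC in auto)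
    thus ?thesis using card_trans by metis
  qed
  have DG: "?D \<subseteq> G" using imgG C1S by blast
  have D0: "0 \<notin> ?D" using imgA C1S by blast
  have hD: "card ?D + 1 \<le> card G" by (rule card_ins0[OF fG lin_0[OF linG] DG D0])
  have GS0': "G \<subseteq> S0" using GS0 by blast
  have hG: "card G \<le> card S0" by (rule card_mono[OF fS0 GS0'])
  have e1: "card S = P" and e2: "card G = card S0" and e3: "card C3 + card S0 = card S"
    and e4: "card ?D + 1 = card G"
    using h3 hD hG cD cS cS0 cardC cC' by linarith+
  have eG: "G = S0" by (rule card_subset_eq'[OF fS0 GS0']) (use e2 in simp)
  have eC3: "C3 = S - S0"
  proof (rule card_subset_eq')
    show "finite (S - S0)" using fS by simp
    show "C3 \<subseteq> S - S0" using C3S by blast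
    have "card (S - S0) = card S - card S0" by (rule card_Diff_subset[OF fS0]) blast
    thus "card (S - S0) \<le> card C3" using e3 by simp
  qed
  have eD: "?D = G - {0}"
  proof (rule card_subset_eq')
    show "finite (G - {0})" using fG by simp
    show "?D \<subseteq> G - {0}" using DG D0 by blast
    have "card (G - {0}) = card G - 1" using lin_0[OF linG] fG by simp
    thus "card (G - {0}) \<le> card ?D" using e4 by simp
  qed
  have cG: "card G = 2 ^ g"
  proof -
    have "2 * card G = 2 * 2 ^ g" using e1 e2 cS0 by simp
    thus ?thesis by simp
  qed
  let ?L = "lspan (insert a G)"
  have Leq: "?L = G \<union> (\<lambda>y. a + y) ` G"
    using lspan_insert[of a G] lspan_lin[OF linG] by simp
  have Hv: "insert a G \<subseteq> vecs n" using av Gv by blast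
  have HQ: "\<forall>x\<in>insert a G. Q x = 0" using al_Q[OF a(1)] sp(2) by blast
  have Ga: "g' \<in> G \<Longrightarrow> B g' a = 0" for g' using aA0 by blast
  have HB: "\<forall>x\<in>insert a G. \<forall>y\<in>insert a G. B x y = 0"
  proof (intro ballI)
    fix x y assume x: "x \<in> insert a G" and y: "y \<in> insert a G"
    show "B x y = 0"
    proof (cases "x = a")
      case True
      show ?thesis
      proof (cases "y = a")
        case True thus ?thesis using \<open>x = a\<close> by simp
      next
        case False hence "y \<in> G" using y by blast
        thus ?thesis using Ga[of y] bform_sym \<open>x = a\<close> by metis
      qed
    next
      case False hence xG: "x \<in> G" using x by blast
      show ?thesis
      proof (cases "y = a")
        case True thus ?thesis using Ga[OF xG] by simp
      next
        case False hence "y \<in> G" using y by blast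
        thus ?thesis using G_ts[OF xG] by blast
      qed
    qed
  qed
  note spL = span_ts[OF Hv HQ HB]
  have disjL: "G \<inter> (\<lambda>y. a + y) ` G = {}"
  proof (rule ccontr)
    assume "G \<inter> (\<lambda>y. a + y) ` G \<noteq> {}"
    then obtain y where y: "y \<in> G" "a + y \<in> G" by blast
    have "(a + y) + y \<in> G" by (rule lin_add[OF linG y(2) y(1)])
    thus False using aG by simp
  qed
  have cL: "card ?L = P"
  proof -
    have "card ?L = card G + card ((\<lambda>y. a + y) ` G)"
      unfolding Leq by (rule card_Un_disjoint[OF fG _ disjL]) (use fG in simp)
    thus ?thesis using card_trans cG by simp
  qed
  have Tv: "G \<union> \<alpha> \<subseteq> vecs n" using Gv al_vecs by blast
  have TQ: "\<forall>x\<in>G \<union> \<alpha>. Q x = 0" using sp(2) al_Q by blast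
  have TB: "\<forall>x\<in>G \<union> \<alpha>. \<forall>y\<in>G \<union> \<alpha>. B x y = 0"
  proof (intro ballI)
    fix x y assume x: "x \<in> G \<union> \<alpha>" and y: "y \<in> G \<union> \<alpha>"
    show "B x y = 0"
    proof (cases "x \<in> G")
      case True note xG = this
      show ?thesis
      proof (cases "y \<in> G")
        case True thus ?thesis using G_ts[OF xG] by blast
      next
        case False hence "y \<in> \<alpha>" using y by blast
        thus ?thesis using xG by blast
      qed
    next
      case False hence xa: "x \<in> \<alpha>" using x by blast
      show ?thesis
      proof (cases "y \<in> G")
        case True
        hence "B y x = 0" using xa by blast
        thus ?thesis using bform_sym by metis
      next
        case False hence "y \<in> \<alpha>" using y by blast
        thus ?thesis using al_ts xa by blast
      qed
    qed
  qed
  note spT = span_ts[OF Tv TQ TB]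
  have cT: "card (lspan (G \<union> \<alpha>)) \<le> P" by (rule ts_bound[OF pi lin_lspan spT(1,2)])
  have fT: "finite (lspan (G \<union> \<alpha>))" by (rule finite_subset[OF spT(1) finite_vecs])
  have LT: "?L \<subseteq> lspan (G \<union> \<alpha>)" by (rule lspan_mono) (use a(1) in blast)
  have LTe: "?L = lspan (G \<union> \<alpha>)" by (rule card_subset_eq'[OF fT LT]) (use cT cL in simp)
  have alL: "\<alpha> \<subseteq> ?L" unfolding LTe using lspan_sup[of "G \<union> \<alpha>"] by blast
  have LS: "?L \<inter> S = G"
  proof
    show "G \<subseteq> ?L \<inter> S" using Leq by blast
    show "?L \<inter> S \<subseteq> G"
    proof
      fix z assume z: "z \<in> ?L \<inter> S"
      show "z \<in> G"
      proof (rule ccontr)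
        assume zG: "z \<notin> G"
        then obtain y where y: "y \<in> G" "z = a + y" using z Leq by blast
        have "z + y \<in> S" using lin_add[OF lin_lspan] z y(1) by blast
        hence "a \<in> S" using y(2) by (simp add: add.assoc)
        hence "a \<in> G" using aperp by blast
        thus False using aG by simp
      qed
    qed
  qed
  define Sig where "Sig = ?L - {0}"
  define Pi where "Pi = S - {0}"
  have genS: "generator n cf g Sig" unfolding Sig_def by (rule gen_of_lin[OF lin_lspan spL(1,2) cL])
  have genP: "generator n cf g Pi" unfolding Pi_def by (rule gen_of_lin[OF lin_lspan sp(1,2) e1])
  have alSig: "\<alpha> \<subseteq> Sig" unfolding Sig_def using alL al_ne0 by blast
  have alPi: "\<not> \<alpha> \<subseteq> Pi"
  proof
    assume "\<alpha> \<subseteq> Pi"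
    obtain c where c: "c \<in> \<alpha>" "B R0 c = 1" using R0 by blast
    have "c \<notin> S" by (rule alS[OF c])
    thus False using c \<open>\<alpha> \<subseteq> Pi\<close> unfolding Pi_def by blast
  qed
  have SP: "Sig \<inter> Pi = G - {0}" unfolding Sig_def Pi_def using LS by blast
  have dimSP: "subspace_dim n (Sig \<inter> Pi) (g - 1)"
  proof -
    have "card (G - {0}) = 2 ^ g - 1" using cG lin_0[OF linG] fG by simp
    hence "card (G - {0}) = 2 ^ (g - 1 + 1) - 1" using g1 by simp
    thus ?thesis unfolding SP subspace_dim_def using is_subspace_lin[OF linG Gv] by simp
  qed
  have E1: "\<alpha> \<inter> Pi = C1"
  proof
    show "C1 \<subseteq> \<alpha> \<inter> Pi" unfolding Pi_def using C1S by blast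
    show "\<alpha> \<inter> Pi \<subseteq> C1"
    proof
      fix x assume x: "x \<in> \<alpha> \<inter> Pi"
      hence "x \<in> S" "x \<noteq> 0" "x \<in> A0" unfolding Pi_def by auto
      moreover have "\<forall>f\<in>A0. B x f = 0" using A0_ts[OF \<open>x \<in> A0\<close>] by blast
      ultimately have "x \<in> G - {0}" by blast
      hence "x \<in> ?D" using eD by simp
      thus "x \<in> C1" using imgA \<open>x \<in> A0\<close> by blast
    qed
  qed
  have E2: "Sig - (\<alpha> \<union> Pi) = C2"
  proof
    show "Sig - (\<alpha> \<union> Pi) \<subseteq> C2"
    proof
      fix z assume z: "z \<in> Sig - (\<alpha> \<union> Pi)"
      hence zL: "z \<in> ?L" and z0: "z \<noteq> 0" and za: "z \<notin> \<alpha>" and zS: "z \<notin> S"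
        unfolding Sig_def Pi_def by auto
      have "z \<notin> G" using zS by blast
      then obtain y where y: "y \<in> G" "z = a + y" using zL Leq by blast
      have y0: "y \<noteq> 0" using y za a(1) by auto
      hence "y \<in> ?D" using eD y(1) by simp
      moreover have "y \<notin> C1"
      proof
        assume yC1: "y \<in> C1"
        have "a \<noteq> y" using aG y(1) by blast
        hence "vadd a y \<in> \<alpha>" using al_sub a(1) yC1 unfolding is_subspace_def by blast
        thus False using za y(2) vadd_eq by simp
      qed
      ultimately obtain X where X: "X \<in> C2" "y = a + X" by blast
      have "z = X" using y(2) X(2) by simp
      thus "z \<in> C2" using X(1) by simp
    qed
    show "C2 \<subseteq> Sig - (\<alpha> \<union> Pi)"
    proof
      fix X assume X: "X \<in> C2"
      have aX: "a + X \<in> G" using imgG X by blast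
      have "X = a + (a + X)" by simp
      hence "X \<in> ?L" using aX Leq by blast
      moreover have "X \<noteq> 0" "X \<notin> \<alpha>" using X C0 Xs_iff by auto
      moreover have "X \<notin> S"
      proof
        assume XS: "X \<in> S"
        have "X0 + X \<in> S" using C2S[OF X] by blast
        hence "X + (X0 + X) \<in> S" by (rule lin_add[OF lin_lspan XS])
        hence "X0 \<in> S" by (simp add: add.commute add.left_commute)
        thus False using X0S by simp
      qed
      ultimately show "X \<in> Sig - (\<alpha> \<union> Pi)" unfolding Sig_def Pi_def by blast
    qed
  qed
  have E3: "Pi - Sig = C3"
  proof -
    have "Pi - Sig = S - G" unfolding Pi_def Sig_def using LS lin_0[OF linG] by blast
    thus ?thesis using eG eC3 by simp
  qed
  have "C = (\<alpha> \<inter> Pi) \<union> (Sig - (\<alpha> \<union> Pi)) \<union> (Pi - Sig)"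
    unfolding E1 E2 E3 by (rule Cpart)
  thus ?thesis unfolding classB_def using genS genP alSig alPi dimSP by blast
qed

lemma caseIIIb2: assumes GS0: "\<forall>w\<in>G. B X0 w = 0" and a: "\<forall>a\<in>\<alpha>. X0 + a \<notin> G"
  shows False
proof -
  let ?GA = "G \<inter> A0"
  have linGA: "lin ?GA" by (rule lin_Int[OF linG A0_lin])
  have fGA: "finite ?GA" using fG by simp
  have fS0: "finite S0" using fS by simp
  have h3: "card C3 + card S0 \<le> card S"
    by (rule card_disj_le[OF fS]) (use C3S in auto)
  have h1: "card C1 + 1 \<le> card ?GA"
    by (rule C1card[OF _ fGA]) (use C1S lin_0[OF linGA] in auto)
  have h2: "card C2 \<le> card G"
  proof -
    have "(\<lambda>y. X0 + y) ` C2 \<subseteq> G" using C2S by blast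
    hence "card ((\<lambda>y. X0 + y) ` C2) \<le> card G" by (rule card_mono[OF fG])
    thus ?thesis using card_trans by metis
  qed
  let ?H = "insert X0 (G \<union> \<alpha>)"
  have Gv: "G \<subseteq> vecs n" using sp(1) by blast
  have Hv: "?H \<subseteq> vecs n" using X0(6) Gv al_vecs by blast
  have HQ: "\<forall>x\<in>?H. Q x = 0"
  proof
    fix x assume x: "x \<in> ?H"
    show "Q x = 0"
    proof (cases "x = X0")
      case True thus ?thesis using X0(3) by simp
    next
      case False
      hence "x \<in> G \<or> x \<in> \<alpha>" using x by blast
      thus ?thesis using sp(2) al_Q by blast
    qed
  qed
  have GA_perp: "g \<in> G \<Longrightarrow> c \<in> \<alpha> \<Longrightarrow> B g c = 0" for g c by blast
  have X0H: "x \<in> ?H \<Longrightarrow> B X0 x = 0" for x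
    using GS0 X0(5) by auto
  have HB: "\<forall>x\<in>?H. \<forall>y\<in>?H. B x y = 0"
  proof (intro ballI)
    fix x y assume x: "x \<in> ?H" and y: "y \<in> ?H"
    show "B x y = 0"
    proof (cases "x = X0")
      case True thus ?thesis using X0H y by blast
    next
      case False
      show ?thesis
      proof (cases "y = X0")
        case True thus ?thesis using X0H[OF x] bform_sym by metis
      next
        case False
        hence "y \<in> G \<union> \<alpha>" "x \<in> G \<union> \<alpha>" using x y \<open>x \<noteq> X0\<close> by auto
        show ?thesis
        proof (cases "x \<in> G")
          case True
          show ?thesis
          proof (cases "y \<in> G")
            case True thus ?thesis using G_ts \<open>x \<in> G\<close> by blast
          next
            case False hence "y \<in> \<alpha>" using \<open>y \<in> G \<union> \<alpha>\<close> by blast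
            thus ?thesis using GA_perp \<open>x \<in> G\<close> by blast
          qed
        next
          case False hence xa: "x \<in> \<alpha>" using \<open>x \<in> G \<union> \<alpha>\<close> by blast
          show ?thesis
          proof (cases "y \<in> G")
            case True thus ?thesis using GA_perp[OF True xa] bform_sym by metis
          next
            case False hence "y \<in> \<alpha>" using \<open>y \<in> G \<union> \<alpha>\<close> by blast
            thus ?thesis using al_ts xa by blast
          qed
        qed
      qed
    qed
  qed
  note spM = span_ts[OF Hv HQ HB]
  have cM: "card (lspan ?H) \<le> P" by (rule ts_bound[OF pi lin_lspan spM(1,2)])
  have fM: "finite (lspan ?H)" by (rule finite_subset[OF spM(1) finite_vecs])
  let ?K = "G \<union> A0"
  have KM: "?K \<subseteq> lspan ?H"
  proof -
    have "G \<union> \<alpha> \<subseteq> lspan ?H" using lspan_sup[of ?H] by blast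
    moreover have "0 \<in> lspan ?H" by (rule lin_0[OF lin_lspan])
    ultimately show ?thesis by blast
  qed
  have X0M: "X0 \<in> lspan ?H" using lspan_sup[of ?H] by blast
  have KM2: "(\<lambda>y. X0 + y) ` ?K \<subseteq> lspan ?H"
  proof
    fix z assume "z \<in> (\<lambda>y. X0 + y) ` ?K"
    then obtain k where k: "k \<in> ?K" "z = X0 + k" by blast
    have "k \<in> lspan ?H" using k KM by blast
    thus "z \<in> lspan ?H" using k(2) X0M lin_add[OF lin_lspan] by blast
  qed
  have X0G: "X0 \<notin> G" using X0S by blast
  have disj: "?K \<inter> (\<lambda>y. X0 + y) ` ?K = {}"
  proof (rule ccontr)
    assume "?K \<inter> (\<lambda>y. X0 + y) ` ?K \<noteq> {}"
    then obtain k where k1: "k \<in> G \<or> k \<in> A0" and k2: "X0 + k \<in> G \<or> X0 + k \<in> A0"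
      by (simp only: disjoint_iff Un_iff image_iff) blast
    show False
    proof (cases "X0 + k \<in> G")
      case True note xkG = this
      show False
      proof (cases "k \<in> G")
        case True
        have "(X0 + k) + k \<in> G" by (rule lin_add[OF linG xkG True])
        thus False using X0G by simp
      next
        case False
        hence kA: "k \<in> A0" using k1 by meson
        show False
        proof (cases "k = 0")
          case True thus False using X0G xkG by simp
        next
          case False hence kal: "k \<in> \<alpha>" using kA by simp
          from bspec[OF a kal] xkG show False by contradiction
        qed
      qed
    next
      case False
      hence kA: "X0 + k \<in> A0" using k2 by meson
      show False
      proof (cases "k \<in> A0")
        case True
        have "(X0 + k) + k \<in> A0" by (rule lin_add[OF A0_lin kA True])
        thus False using X0(4,7) by simp
      next
        case False
        hence kG: "k \<in> G" using k1 by meson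
        show False
        proof (cases "X0 + k = 0")
          case True hence "X0 = k" by (simp add: add_eq_0_iff)
          thus False using kG X0G by simp
        next
          case False
          hence c: "X0 + k \<in> \<alpha>" using kA by simp
          have "X0 + (X0 + k) \<notin> G" by (rule bspec[OF a c])
          thus False using kG by simp
        qed
      qed
    qed
  qed
  have hK: "card ?K + card ((\<lambda>y. X0 + y) ` ?K) \<le> card (lspan ?H)"
    by (rule card_disj_le[OF fM KM KM2 disj])
  have hK2: "card ?K + card ?GA = card G + card A0"
    using card_Un_Int[OF fG fA0] by simp
  obtain c where c: "c \<in> \<alpha>" "B R0 c = 1" using R0 by blast
  have i2: "2 * card ?GA \<le> card A0"
    by (rule index2[OF linGA _ _ _ A0_lin fA0, of c]) (use c alS in auto)
  let ?Z = "{a\<in>A0. \<forall>s\<in>S. B s a = 0}"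
  have du: "card S * card ?Z = card A0 * card {s\<in>S. \<forall>a\<in>A0. B s a = 0}"
    by (rule duality[OF lin_lspan fS A0_lin fA0])
  have GG: "{s\<in>S. \<forall>a\<in>A0. B s a = 0} = G" by blast
  have GAZ: "?GA \<subseteq> ?Z" using sp(3) by blast
  have fZ: "finite ?Z" using fA0 by simp
  have zz: "card ?GA \<le> card ?Z" by (rule card_mono[OF fZ GAZ])
  have ga1: "card ?GA \<ge> 1" using h1 by simp
  have e1: "card S = P" and e2: "2 * card G + 2 * card ?GA = P" and e3: "card A0 = 2 * card ?GA"
    using h1 h2 h3 hK hK2 i2 cM cS0 cS cardC cC' card_trans[of X0 ?K] by linarith+
  have "P * card ?GA \<le> P * card ?Z" by (rule mult_le_mono2[OF zz])
  also have "P * card ?Z = card A0 * card G" using du GG e1 by simp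
  finally have "(2 * card G + 2 * card ?GA) * card ?GA \<le> (2 * card ?GA) * card G"
    using e2 e3 by simp
  hence "card ?GA * card ?GA \<le> 0" by (simp add: algebra_simps)
  thus False using ga1 by (simp add: le_0_eq)
qed

lemma caseIII: "classB n cf g \<alpha> C"
proof (cases "\<forall>w\<in>G. B X0 w = 0")
  case False
  then obtain w where "w \<in> G" "B X0 w \<noteq> 0" by blast
  hence "w \<in> G" "B X0 w = 1" using bit_cases2 by auto
  thus ?thesis using caseIIIa by blast
next
  case True
  show ?thesis
  proof (cases "\<exists>a\<in>\<alpha>. X0 + a \<in> G")
    case True
    then obtain a where "a \<in> \<alpha>" "X0 + a \<in> G" by blast
    thus ?thesis using caseIIIb1 \<open>\<forall>w\<in>G. B X0 w = 0\<close> by blast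
  next
    case False
    thus ?thesis using caseIIIb2 \<open>\<forall>w\<in>G. B X0 w = 0\<close> by blast
  qed
qed

end

context clq begin

lemma caseIII: assumes "C3 \<noteq> {}" "C2 \<noteq> {}" shows "classB n cf g \<alpha> C"
proof -
  obtain X0 R0 where "X0 \<in> C2" "R0 \<in> C3" using assms by blast
  then interpret clq3 n cf \<alpha> g s C X0 R0 by unfold_locales
  show ?thesis by (rule caseIII)
qed

theorem main: "classA n cf g \<alpha> C \<or> classB n cf g \<alpha> C"
  using caseI caseII caseIII by blast

end


theorem lemma5p4:
  fixes n g s :: nat and a :: "nat \<Rightarrow> nat \<Rightarrow> bit"
    and \<alpha> C :: "(nat \<Rightarrow> bit) set"
  assumes "nonsingular n a"
    and "proj_index n a g" and "g \<ge> 1"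
    and "s < g"
    and "subspace_dim n \<alpha> s" and "\<alpha> \<subseteq> quadric n a"
    and "clique_s n a \<alpha> C" and "card C = 2 ^ (g + 1) - 1"
  shows "classA n a g \<alpha> C \<or> classB n a g \<alpha> C"
proof -
  have sub: "is_subspace n \<alpha>" and cal: "card \<alpha> = 2 ^ (s + 1) - 1"
    using assms(5) unfolding subspace_dim_def by auto
  interpret clq n a \<alpha> g s C
    by unfold_locales (use assms sub cal in auto)
  show ?thesis by (rule main)
qed

end
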